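(* For any $\beta>0$ and any $B>0$, \[ \mathbb{P}_{(0,2B)}\left(\tau_2(y) < \tau_2(B)\right) \ge (1-\mathrm{e}^{-\beta B})\mathrm{e}^{-\beta(y-2B)} \] for all $y \ge 2B$.
   Context: For $\beta>0$ and an initial state $(x,y)$ with $x\le 0$, $y\ge 0$, let $(Q_1,Q_2)$ be the continuous process on $[0,\infty)$ solving \[ Q_1(t) = x + \sqrt{2}W(t) - \beta t + \int_0^t(-Q_1(s)+Q_2(s))\,ds - L(t),\qquad Q_2(t) = y + L(t) - \int_0^t Q_2(s)\,ds, \] where $W$ is a standard Brownian motion and $L$ is the unique nondecreasing nonnegative càdlàg process with $L(0)=0$ such that $Q_1(t)\le 0$ for all $t$ and $\int_0^\infty \mathbf{1}_{[Q_1(t)<0]}\,dL(t)=0$. $\mathbb{P}_{(x,y)}$ denotes probability when $(Q_1(0),Q_2(0))=(x,y)$; $\tau_2(z)=\inf\{t\ge0: Q_2(t)=z\}$. *)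

theory Defs
  imports "HOL-Probability.Probability"
begin

definition std_brownian_motion :: "'a measure \<Rightarrow> (real \<Rightarrow> 'a \<Rightarrow> real) \<Rightarrow> bool" where
  "std_brownian_motion M W \<longleftrightarrow>
     prob_space M \<and>
     (\<forall>t. W t \<in> borel_measurable M) \<and>
     (\<forall>\<omega>\<in>space M. W 0 \<omega> = 0 \<and> continuous_on {0..} (\<lambda>t. W t \<omega>)) \<and>
     (\<forall>s t. 0 \<le> s \<longrightarrow> s < t \<longrightarrow>
        distributed M lborel (\<lambda>\<omega>. W t \<omega> - W s \<omega>)
          (\<lambda>x. ennreal (normal_density 0 (sqrt (t - s)) x))) \<and>
     (\<forall>(ts :: nat \<Rightarrow> real) n. 0 \<le> ts 0 \<longrightarrow> (\<forall>i<n. ts i < ts (Suc i)) \<longrightarrow>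
        prob_space.indep_vars M (\<lambda>_. borel) (\<lambda>i \<omega>. W (ts (Suc i)) \<omega> - W (ts i) \<omega>) {..<n})"

text \<open>The condition that L increases only when Q1 = 0 is
  the Lebesgue--Stieltjes integral condition: the measure dL (L extended by 0 to the left
  of time 0) gives zero mass to {t >= 0. Q1 t < 0}.\<close>
definition reflected_solution ::
  "'a measure \<Rightarrow> real \<Rightarrow> real \<Rightarrow> real \<Rightarrow> (real \<Rightarrow> 'a \<Rightarrow> real) \<Rightarrow>
   (real \<Rightarrow> 'a \<Rightarrow> real) \<Rightarrow> (real \<Rightarrow> 'a \<Rightarrow> real) \<Rightarrow> (real \<Rightarrow> 'a \<Rightarrow> real) \<Rightarrow> bool" where
  "reflected_solution M \<beta> x y W Q1 Q2 L \<longleftrightarrow>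
     (\<forall>t. Q1 t \<in> borel_measurable M \<and> Q2 t \<in> borel_measurable M \<and> L t \<in> borel_measurable M) \<and>
     (\<forall>\<omega>\<in>space M.
        continuous_on {0..} (\<lambda>t. Q1 t \<omega>) \<and> continuous_on {0..} (\<lambda>t. Q2 t \<omega>) \<and>
        (\<forall>t\<ge>0. Q1 t \<omega> = x + sqrt 2 * W t \<omega> - \<beta> * t
                   + integral {0..t} (\<lambda>s. - Q1 s \<omega> + Q2 s \<omega>) - L t \<omega>) \<and>
        (\<forall>t\<ge>0. Q2 t \<omega> = y + L t \<omega> - integral {0..t} (\<lambda>s. Q2 s \<omega>)) \<and>
        L 0 \<omega> = 0 \<and>
        (\<forall>t\<ge>0. 0 \<le> L t \<omega>) \<and>
        (\<forall>s t. 0 \<le> s \<longrightarrow> s \<le> t \<longrightarrow> L s \<omega> \<le> L t \<omega>) \<and>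
        (\<forall>t\<ge>0. ((\<lambda>s. L s \<omega>) \<longlongrightarrow> L t \<omega>) (at_right t)) \<and>
        (\<forall>t>0. \<exists>l. ((\<lambda>s. L s \<omega>) \<longlongrightarrow> l) (at_left t)) \<and>
        (\<forall>t\<ge>0. Q1 t \<omega> \<le> 0) \<and>
        emeasure (interval_measure (\<lambda>t. L (max 0 t) \<omega>)) {t. 0 \<le> t \<and> Q1 t \<omega> < 0} = 0)"

text \<open>Hitting time inf {t >= 0. f t = z}, with inf of the empty set = +oo.\<close>
definition hitting_time :: "(real \<Rightarrow> real) \<Rightarrow> real \<Rightarrow> ereal" where
  "hitting_time f z = Inf (ereal ` {t. 0 \<le> t \<and> f t = z})"

end

theory Submission
  imports Defs "HOL-Real_Asymp.Real_Asymp"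
begin


lemma normal_mgf_density:
  fixes \<sigma> l x :: real assumes "\<sigma> > 0"
  shows "normal_density 0 \<sigma> x * exp (l * x) = exp (l\<^sup>2 * \<sigma>\<^sup>2 / 2) * normal_density (l * \<sigma>\<^sup>2) \<sigma> x"
proof -
  have "-(x - 0)\<^sup>2/ (2 * \<sigma>\<^sup>2) + l * x = l\<^sup>2 * \<sigma>\<^sup>2 / 2 + (-(x - l * \<sigma>\<^sup>2)\<^sup>2/ (2 * \<sigma>\<^sup>2))"
    using assms by (simp add: field_simps power2_eq_square)
  then show ?thesis unfolding normal_density_def
    by (simp add: exp_add[symmetric] mult_ac)
qed

lemma normal_mgf:
  fixes \<sigma> l :: real
  assumes "\<sigma> > 0" and D: "distributed M lborel Z (\<lambda>x. ennreal (normal_density 0 \<sigma> x))"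
  shows "integrable M (\<lambda>\<omega>. exp (l * Z \<omega>))"
    and "(\<integral>\<omega>. exp (l * Z \<omega>) \<partial>M) = exp (l\<^sup>2 * \<sigma>\<^sup>2 / 2)"
proof -
  have eq: "(\<lambda>x. normal_density 0 \<sigma> x * exp (l * x)) = (\<lambda>x. exp (l\<^sup>2 * \<sigma>\<^sup>2 / 2) * normal_density (l * \<sigma>\<^sup>2) \<sigma> x)"
    using normal_mgf_density[OF assms(1)] by auto
  have "integrable lborel (\<lambda>x. normal_density 0 \<sigma> x * exp (l * x))"
    unfolding eq using assms by (intro integrable_mult_right integrable_normal_density)
  then show "integrable M (\<lambda>\<omega>. exp (l * Z \<omega>))"
    using distributed_integrable[OF D, of "\<lambda>x. exp (l * x)"] by simp
  have "(\<integral>\<omega>. exp (l * Z \<omega>) \<partial>M) = (\<integral>x. normal_density 0 \<sigma> x * exp (l * x) \<partial>lborel)"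
    using distributed_integral[OF D, of "\<lambda>x. exp (l * x)"] by simp
  also have "\<dots> = exp (l\<^sup>2 * \<sigma>\<^sup>2 / 2)" unfolding eq using assms by simp
  finally show "(\<integral>\<omega>. exp (l * Z \<omega>) \<partial>M) = exp (l\<^sup>2 * \<sigma>\<^sup>2 / 2)" .
qed

lemma bm_mgf:
  assumes "std_brownian_motion M W" "0 \<le> s" "s < t"
  shows "integrable M (\<lambda>\<omega>. exp (l * (W t \<omega> - W s \<omega>)))"
    and "(\<integral>\<omega>. exp (l * (W t \<omega> - W s \<omega>)) \<partial>M) = exp (l\<^sup>2 * (t - s) / 2)"
proof -
  have D: "distributed M lborel (\<lambda>\<omega>. W t \<omega> - W s \<omega>) (\<lambda>x. ennreal (normal_density 0 (sqrt (t - s)) x))"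
    using assms unfolding std_brownian_motion_def by blast
  have p: "sqrt (t - s) > 0" using assms by simp
  show "integrable M (\<lambda>\<omega>. exp (l * (W t \<omega> - W s \<omega>)))" using normal_mgf(1)[OF p D] .
  show "(\<integral>\<omega>. exp (l * (W t \<omega> - W s \<omega>)) \<partial>M) = exp (l\<^sup>2 * (t - s) / 2)"
    using normal_mgf(2)[OF p D, of l] assms by simp
qed



lemma hitting_le:
  assumes "0 \<le> t" "f t = z" shows "hitting_time f z \<le> ereal t"
  unfolding hitting_time_def using assms by (intro Inf_lower) auto

lemma hitting_gt:
  fixes f :: "real \<Rightarrow> real"
  assumes c: "continuous_on {0..} f" and T: "0 \<le> T" and pos: "\<forall>s\<in>{0..T}. f s > B"
  shows "ereal T < hitting_time f B"
proof -
  have "f T > B" using pos T by auto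
  have "isCont f T \<or> True" by simp
  have "continuous (at T within {0..}) f" using c T
    by (simp add: continuous_on_eq_continuous_within)
  then obtain e where e: "e > 0" "\<And>s. s \<in> {0..} \<Longrightarrow> dist s T < e \<Longrightarrow> dist (f s) (f T) < f T - B"
    using \<open>f T > B\<close> unfolding continuous_within_eps_delta by (metis diff_gt_0_iff_gt)
  have "ereal (T + e) \<le> hitting_time f B"
    unfolding hitting_time_def
  proof (rule Inf_greatest)
    fix x assume "x \<in> ereal ` {t. 0 \<le> t \<and> f t = B}"
    then obtain s where s: "x = ereal s" "0 \<le> s" "f s = B" by auto
    have "\<not> s \<le> T" using pos s by auto
    moreover have "\<not> dist s T < e" using e(2)[of s] s by (auto simp: dist_real_def)
    ultimately show "ereal (T + e) \<le> x" using s by (auto simp: dist_real_def)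
  qed
  moreover have "ereal T < ereal (T + e)" using e by simp
  ultimately show ?thesis by order
qed

lemma event_from_path:
  fixes f :: "real \<Rightarrow> real"
  assumes c: "continuous_on {0..} f" and f0: "f 0 = 2 * B" and y: "y \<ge> 2 * B"
    and T: "0 \<le> T" and pos: "\<forall>s\<in>{0..T}. f s > B" and fT: "f T \<ge> y"
  shows "hitting_time f y < hitting_time f B"
proof -
  have "continuous_on {0..T} f" using c by (rule continuous_on_subset) auto
  then obtain t where t: "t \<in> {0..T}" "f t = y"
    using IVT'[of f 0 y T] f0 y fT T by auto
  have "hitting_time f y \<le> ereal t" using t by (intro hitting_le) auto
  also have "\<dots> \<le> ereal T" using t by auto
  also have "\<dots> < hitting_time f B" by (rule hitting_gt[OF c T pos])
  finally show ?thesis .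
qed

lemma rat_near:
  fixes q t d :: real
  assumes "q \<in> \<rat>" "0 \<le> t" "t \<le> q" "d > 0"
  shows "\<exists>r\<in>\<rat>. 0 \<le> r \<and> r \<le> q \<and> \<bar>r - t\<bar> < d"
proof (cases "t = q")
  case True then show ?thesis using assms by (intro bexI[of _ q]) auto
next
  case False
  then have "t < min (t + d) q" using assms by auto
  then obtain r where "r \<in> \<rat>" "t < r" "r < min (t + d) q" using Rats_dense_in_real by blast
  then show ?thesis using assms by (intro bexI[of _ r]) auto
qed

lemma cont_at_within:
  fixes f :: "real \<Rightarrow> real"
  assumes c: "continuous_on {0..} f" and t: "0 \<le> t" and e: "e > 0"
  shows "\<exists>d>0. \<forall>s. 0 \<le> s \<longrightarrow> \<bar>s - t\<bar> < d \<longrightarrow> \<bar>f s - f t\<bar> < e"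
proof -
  have "continuous (at t within {0..}) f" using c t
    by (simp add: continuous_on_eq_continuous_within)
  then obtain d where "d > 0" "\<forall>x'\<in>{0..}. \<bar>x' - t\<bar> < d \<longrightarrow> \<bar>f x' - f t\<bar> < e"
    using e unfolding continuous_within_eps_delta dist_real_def by blast
  then show ?thesis by auto
qed

lemma hitting_char:
  fixes f :: "real \<Rightarrow> real"
  assumes c: "continuous_on {0..} f" and f0: "f 0 = 2 * B" and B: "B > 0" and y: "y \<ge> 2 * B"
  shows "hitting_time f y < hitting_time f B \<longleftrightarrow>
    (\<exists>q\<in>\<rat>. 0 \<le> q \<and> (\<exists>m::nat. \<forall>r\<in>\<rat>. 0 \<le> r \<longrightarrow> r \<le> q \<longrightarrow> f r \<ge> B + 1 / (real m + 1))
       \<and> (\<forall>m::nat. \<exists>r\<in>\<rat>. 0 \<le> r \<and> r \<le> q \<and> f r > y - 1 / (real m + 1)))"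
  (is "?L \<longleftrightarrow> ?R")
proof
  assume L: ?L
  have "hitting_time f y < \<infinity>" using L by auto
  then have "Inf (ereal ` {t. 0 \<le> t \<and> f t = y}) < hitting_time f B" using L unfolding hitting_time_def by simp
  then obtain t0 where t0: "0 \<le> t0" "f t0 = y" "ereal t0 < hitting_time f B"
    by (auto simp: Inf_less_iff)
  obtain z where z: "t0 < z" "ereal z < hitting_time f B"
  proof (cases "hitting_time f B")
    case (real u) then show ?thesis using t0 that[of "(t0 + u)/2"] by auto
  next
    case PInf then show ?thesis using that[of "t0 + 1"] by auto
  next
    case MInf then show ?thesis using t0 by auto
  qed
  obtain q where q: "q \<in> \<rat>" "t0 < q" "q < z" using Rats_dense_in_real z(1) by blast
  have neB: "f t \<noteq> B" if "0 \<le> t" "t \<le> q" for t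
  proof
    assume "f t = B"
    then have "hitting_time f B \<le> ereal t" using that by (intro hitting_le)
    also have "\<dots> \<le> ereal z" using that q by auto
    finally show False using z by simp
  qed
  have gtB: "f t > B" if "0 \<le> t" "t \<le> q" for t
  proof (rule ccontr)
    assume "\<not> f t > B"
    have "continuous_on {0..t} f" using c by (rule continuous_on_subset) auto
    have "\<exists>x\<ge>0. x \<le> t \<and> f x = B"
      using IVT2'[of f t B 0] \<open>\<not> f t > B\<close> f0 B that \<open>continuous_on {0..t} f\<close> by simp
    then obtain s where "s \<in> {0..t}" "f s = B" by auto
    then show False using neB[of s] that by auto
  qed
  have cq: "continuous_on {0..q} f" using c by (rule continuous_on_subset) auto
  obtain s where s: "s \<in> {0..q}" "\<forall>t\<in>{0..q}. f s \<le> f t"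
    using continuous_attains_inf[OF compact_Icc _ cq] q t0 by fastforce
  have "f s - B > 0" using gtB s by auto
  then obtain m :: nat where m: "1 / (real m + 1) < f s - B"
    by (metis add.commute nat_approx_posE of_nat_Suc)
  have part1: "\<forall>r\<in>\<rat>. 0 \<le> r \<longrightarrow> r \<le> q \<longrightarrow> f r \<ge> B + 1 / (real m + 1)"
  proof (intro ballI impI)
    fix r assume "0 \<le> r" "r \<le> q"
    then have "f s \<le> f r" using s by auto
    then show "f r \<ge> B + 1 / (real m + 1)" using m by linarith
  qed
  have part2: "\<exists>r\<in>\<rat>. 0 \<le> r \<and> r \<le> q \<and> f r > y - 1 / (real m + 1)" for m :: nat
  proof -
    obtain d where d: "d > 0" "\<forall>s. 0 \<le> s \<longrightarrow> \<bar>s - t0\<bar> < d \<longrightarrow> \<bar>f s - f t0\<bar> < 1 / (real m + 1)"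
      using cont_at_within[OF c t0(1), of "1 / (real m + 1)"] by auto
    obtain r where r: "r \<in> \<rat>" "0 \<le> r" "r \<le> q" "\<bar>r - t0\<bar> < d"
      using rat_near[OF q(1) t0(1) _ d(1)] q by auto
    show ?thesis using r d t0 by (intro bexI[of _ r]) force+
  qed
  show ?R using q t0 part1 part2 by (intro bexI[of _ q]) auto
next
  assume ?R
  then obtain q m where q: "q \<in> \<rat>" "0 \<le> q"
    and low: "\<forall>r\<in>\<rat>. 0 \<le> r \<longrightarrow> r \<le> q \<longrightarrow> f r \<ge> B + 1 / (real m + 1)"
    and up: "\<forall>m::nat. \<exists>r\<in>\<rat>. 0 \<le> r \<and> r \<le> q \<and> f r > y - 1 / (real m + 1)"
    by blast
  have allq: "f t \<ge> B + 1 / (real m + 1)" if tt: "0 \<le> t" "t \<le> q" for t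
  proof (rule ccontr)
    assume "\<not> ?thesis"
    then have "B + 1 / (real m + 1) - f t > 0" by simp
    then obtain d where d: "d > 0" "\<forall>s. 0 \<le> s \<longrightarrow> \<bar>s - t\<bar> < d \<longrightarrow> \<bar>f s - f t\<bar> < B + 1 / (real m + 1) - f t"
      using cont_at_within[OF c tt(1)] by blast
    obtain r where r: "r \<in> \<rat>" "0 \<le> r" "r \<le> q" "\<bar>r - t\<bar> < d"
      using rat_near[OF q(1) tt d(1)] by auto
    have "f r \<ge> B + 1 / (real m + 1)" using low r by auto
    moreover have "\<bar>f r - f t\<bar> < B + 1 / (real m + 1) - f t" using d r by auto
    ultimately show False by linarith
  qed
  have pos: "\<forall>s\<in>{0..q}. f s > B"
  proof
    fix s assume "s \<in> {0..q}"
    then have "f s \<ge> B + 1 / (real m + 1)" using allq by auto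
    moreover have "1 / (real m + 1) > 0" by simp
    ultimately show "f s > B" by linarith
  qed
  have cq: "continuous_on {0..q} f" using c by (rule continuous_on_subset) auto
  obtain s where s: "s \<in> {0..q}" "\<forall>t\<in>{0..q}. f t \<le> f s"
    using continuous_attains_sup[OF compact_Icc _ cq] q by fastforce
  have "f s \<ge> y"
  proof (rule ccontr)
    assume "\<not> f s \<ge> y"
    then obtain k :: nat where k: "1 / (real k + 1) < y - f s"
      by (metis add.commute diff_gt_0_iff_gt nat_approx_posE not_le of_nat_Suc)
    obtain r where "r \<in> \<rat>" "0 \<le> r" "r \<le> q" "f r > y - 1 / (real k + 1)" using up by blast
    then show False using s k by force
  qed
  then have "hitting_time f y < hitting_time f B"
    using event_from_path[OF c f0 y _ _ \<open>f s \<ge> y\<close>] s pos by auto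
  then show ?L .
qed



lemma refl_D:
  assumes "reflected_solution M \<beta> x y W Q1 Q2 L" "\<omega> \<in> space M"
  shows "continuous_on {0..} (\<lambda>t. Q1 t \<omega>)" "continuous_on {0..} (\<lambda>t. Q2 t \<omega>)"
   "\<And>t. t \<ge> 0 \<Longrightarrow> Q1 t \<omega> = x + sqrt 2 * W t \<omega> - \<beta> * t
                   + integral {0..t} (\<lambda>s. - Q1 s \<omega> + Q2 s \<omega>) - L t \<omega>"
   "\<And>t. t \<ge> 0 \<Longrightarrow> Q2 t \<omega> = y + L t \<omega> - integral {0..t} (\<lambda>s. Q2 s \<omega>)"
   "L 0 \<omega> = 0"
   "\<And>t. t \<ge> 0 \<Longrightarrow> Q1 t \<omega> \<le> 0"
   "\<And>t. Q2 t \<in> borel_measurable M"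
proof -
  have A: "\<forall>\<omega>\<in>space M.
        continuous_on {0..} (\<lambda>t. Q1 t \<omega>) \<and> continuous_on {0..} (\<lambda>t. Q2 t \<omega>) \<and>
        (\<forall>t\<ge>0. Q1 t \<omega> = x + sqrt 2 * W t \<omega> - \<beta> * t
                   + integral {0..t} (\<lambda>s. - Q1 s \<omega> + Q2 s \<omega>) - L t \<omega>) \<and>
        (\<forall>t\<ge>0. Q2 t \<omega> = y + L t \<omega> - integral {0..t} (\<lambda>s. Q2 s \<omega>)) \<and>
        L 0 \<omega> = 0 \<and>
        (\<forall>t\<ge>0. 0 \<le> L t \<omega>) \<and>
        (\<forall>s t. 0 \<le> s \<longrightarrow> s \<le> t \<longrightarrow> L s \<omega> \<le> L t \<omega>) \<and>
        (\<forall>t\<ge>0. ((\<lambda>s. L s \<omega>) \<longlongrightarrow> L t \<omega>) (at_right t)) \<and>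
        (\<forall>t>0. \<exists>l. ((\<lambda>s. L s \<omega>) \<longlongrightarrow> l) (at_left t)) \<and>
        (\<forall>t\<ge>0. Q1 t \<omega> \<le> 0) \<and>
        emeasure (interval_measure (\<lambda>t. L (max 0 t) \<omega>)) {t. 0 \<le> t \<and> Q1 t \<omega> < 0} = 0"
    and B: "\<forall>t. Q1 t \<in> borel_measurable M \<and> Q2 t \<in> borel_measurable M \<and> L t \<in> borel_measurable M"
    using assms(1) unfolding reflected_solution_def by (rule conjunct2, rule conjunct1)
  note C = bspec[OF A assms(2)]
  show "continuous_on {0..} (\<lambda>t. Q1 t \<omega>)" using C by (rule conjunct1)
  show "continuous_on {0..} (\<lambda>t. Q2 t \<omega>)" using C[THEN conjunct2] by (rule conjunct1)
  show "\<And>t. t \<ge> 0 \<Longrightarrow> Q1 t \<omega> = x + sqrt 2 * W t \<omega> - \<beta> * t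
                   + integral {0..t} (\<lambda>s. - Q1 s \<omega> + Q2 s \<omega>) - L t \<omega>"
    using C[THEN conjunct2, THEN conjunct2, THEN conjunct1] by blast
  show "\<And>t. t \<ge> 0 \<Longrightarrow> Q2 t \<omega> = y + L t \<omega> - integral {0..t} (\<lambda>s. Q2 s \<omega>)"
    using C[THEN conjunct2, THEN conjunct2, THEN conjunct2, THEN conjunct1] by blast
  show "L 0 \<omega> = 0"
    using C[THEN conjunct2, THEN conjunct2, THEN conjunct2, THEN conjunct2, THEN conjunct1] .
  show "\<And>t. t \<ge> 0 \<Longrightarrow> Q1 t \<omega> \<le> 0"
    using C[THEN conjunct2, THEN conjunct2, THEN conjunct2, THEN conjunct2, THEN conjunct2,
      THEN conjunct2, THEN conjunct2, THEN conjunct2, THEN conjunct2, THEN conjunct1] by blast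
  show "\<And>t. Q2 t \<in> borel_measurable M" using B by blast
qed

lemma refl_meas:
  assumes "reflected_solution M \<beta> x y W Q1 Q2 L"
  shows "Q1 t \<in> borel_measurable M" "Q2 t \<in> borel_measurable M"
proof -
  have B: "\<forall>t. Q1 t \<in> borel_measurable M \<and> Q2 t \<in> borel_measurable M \<and> L t \<in> borel_measurable M"
    using assms(1) unfolding reflected_solution_def by (rule conjunct1)
  then show "Q1 t \<in> borel_measurable M" "Q2 t \<in> borel_measurable M" by blast+
qed

lemma Q2_ge:
  assumes R: "reflected_solution M \<beta> 0 (2 * B) W Q1 Q2 L" and w: "\<omega> \<in> space M" and t: "0 \<le> t"
  shows "Q2 t \<omega> \<ge> 2 * B + sqrt 2 * W t \<omega> - \<beta> * t"
proof -
  note D = refl_D[OF R w]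
  have c1: "continuous_on {0..} (\<lambda>t. Q1 t \<omega>)" and c2: "continuous_on {0..} (\<lambda>t. Q2 t \<omega>)"
    and e1: "Q1 t \<omega> = 0 + sqrt 2 * W t \<omega> - \<beta> * t + integral {0..t} (\<lambda>s. - Q1 s \<omega> + Q2 s \<omega>) - L t \<omega>"
    and e2: "Q2 t \<omega> = 2 * B + L t \<omega> - integral {0..t} (\<lambda>s. Q2 s \<omega>)"
    and neg: "\<forall>t\<ge>0. Q1 t \<omega> \<le> 0"
    using D(1,2) D(3)[OF t] D(4)[OF t] D(6) by auto
  have i1: "(\<lambda>s. Q1 s \<omega>) integrable_on {0..t}"
    by (rule integrable_continuous_interval, rule continuous_on_subset[OF c1]) auto
  have i2: "(\<lambda>s. Q2 s \<omega>) integrable_on {0..t}"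
    by (rule integrable_continuous_interval, rule continuous_on_subset[OF c2]) auto
  have "integral {0..t} (\<lambda>s. - Q1 s \<omega> + Q2 s \<omega>) = - integral {0..t} (\<lambda>s. Q1 s \<omega>) + integral {0..t} (\<lambda>s. Q2 s \<omega>)"
    using integral_diff[OF i2 i1] by (simp add: algebra_simps)
  moreover have "integral {0..t} (\<lambda>s. Q1 s \<omega>) \<le> 0"
    using integral_nonneg[of "\<lambda>s. - Q1 s \<omega>" "{0..t}"] i1 neg integrable_neg[OF i1]
    by (simp add: integral_neg)
  moreover have "Q1 t \<omega> \<le> 0" using neg t by auto
  ultimately show ?thesis using e1 e2 by linarith
qed

lemma Q2_0:
  assumes R: "reflected_solution M \<beta> 0 (2 * B) W Q1 Q2 L" and w: "\<omega> \<in> space M"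
  shows "Q2 0 \<omega> = 2 * B"
proof -
  have "Q2 0 \<omega> = 2 * B + L 0 \<omega> - integral {0..0} (\<lambda>s. Q2 s \<omega>)" "L 0 \<omega> = 0"
    using refl_D(4,5)[OF R w] by auto
  then show ?thesis by simp
qed

lemma S_measurable:
  assumes R: "reflected_solution M \<beta> 0 (2 * B) W Q1 Q2 L" and B: "B > 0" and y: "y \<ge> 2 * B"
  shows "{\<omega> \<in> space M. hitting_time (\<lambda>t. Q2 t \<omega>) y < hitting_time (\<lambda>t. Q2 t \<omega>) B} \<in> sets M"
proof -
  have meas[measurable]: "Q2 t \<in> borel_measurable M" for t using refl_meas[OF R] by blast
  have "{\<omega> \<in> space M. hitting_time (\<lambda>t. Q2 t \<omega>) y < hitting_time (\<lambda>t. Q2 t \<omega>) B} =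
    {\<omega> \<in> space M. (\<exists>q\<in>\<rat>. 0 \<le> q \<and> (\<exists>m::nat. \<forall>r\<in>\<rat>. 0 \<le> r \<longrightarrow> r \<le> q \<longrightarrow> Q2 r \<omega> \<ge> B + 1 / (real m + 1))
       \<and> (\<forall>m::nat. \<exists>r\<in>\<rat>. 0 \<le> r \<and> r \<le> q \<and> Q2 r \<omega> > y - 1 / (real m + 1)))}"
    apply (rule Collect_cong, rule conj_cong, rule refl)
    apply (rule hitting_char[OF refl_D(2)[OF R] Q2_0[OF R] B y])
    by assumption+
  also have "\<dots> \<in> sets M"
    using countable_rat by measurable
  finally show ?thesis .
qed



definition Sv :: "(nat \<Rightarrow> real) \<Rightarrow> nat \<Rightarrow> real" where "Sv v k = (\<Sum>i<k. v i)"

definition alive :: "real \<Rightarrow> real \<Rightarrow> (nat \<Rightarrow> real) \<Rightarrow> nat \<Rightarrow> bool" where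
  "alive lo hi v k \<longleftrightarrow> (\<forall>j\<le>k. lo < Sv v j \<and> Sv v j < hi)"

primrec Yv :: "real \<Rightarrow> real \<Rightarrow> real \<Rightarrow> (nat \<Rightarrow> real) \<Rightarrow> nat \<Rightarrow> real" where
  "Yv be lo hi v 0 = 1"
| "Yv be lo hi v (Suc k) = (if alive lo hi v k then exp (be * Sv v (Suc k)) else Yv be lo hi v k)"

lemma Sv_0[simp]: "Sv v 0 = 0" by (simp add: Sv_def)
lemma Sv_Suc: "Sv v (Suc k) = Sv v k + v k" by (simp add: Sv_def)

lemma alive_Suc: "alive lo hi v (Suc k) \<Longrightarrow> alive lo hi v k"
  unfolding alive_def by auto

lemma Yv_alive: "alive lo hi v k \<Longrightarrow> Yv be lo hi v k = exp (be * Sv v k)"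
proof (induction k)
  case 0 then show ?case by simp
next
  case (Suc k) then show ?case using alive_Suc by auto
qed

lemma Yv_step: "Yv be lo hi v (Suc k) = Yv be lo hi v k +
   (if alive lo hi v k then exp (be * Sv v k) else 0) * (exp (be * v k) - 1)"
  using Yv_alive[of lo hi v k be]
  by (simp add: Sv_Suc distrib_left exp_add algebra_simps)

lemma Yv_dead: "\<not> alive lo hi v k \<Longrightarrow> k \<le> n \<Longrightarrow> Yv be lo hi v n = Yv be lo hi v k"
proof (induction n)
  case 0 then show ?case by simp
next
  case (Suc n)
  show ?case
  proof (cases "k = Suc n")
    case True then show ?thesis by simp
  next
    case False
    then have "k \<le> n" using Suc by simp
    have "\<not> alive lo hi v n"
      using Suc(2) \<open>k \<le> n\<close> unfolding alive_def by (meson order_trans)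
    then show ?thesis using Suc.IH[OF Suc(2) \<open>k \<le> n\<close>] by simp
  qed
qed

definition Uev :: "real \<Rightarrow> real \<Rightarrow> (nat \<Rightarrow> real) \<Rightarrow> nat \<Rightarrow> bool" where
  "Uev lo hi v N \<longleftrightarrow> (\<exists>k\<le>N. Sv v k \<ge> hi \<and> (\<forall>j<k. lo < Sv v j))"

lemma Yv_bound:
  assumes lo: "lo < 0" and hi: "0 \<le> hi" and be: "be > 0" and de: "\<delta> > 0" and mu: "\<mu> \<ge> 0" and lam: "lam \<ge> 0"
  shows "Yv be lo hi v N \<le> exp (be * (hi + \<delta>)) * (if Uev lo hi v N then 1 else 0)
     + exp (be * lo) * (if Uev lo hi v N then 0 else 1)
     + exp (be * hi) * exp (lam * (Sv v N - lo))
     + exp (be * hi) * (\<Sum>i<N. exp ((be + \<mu>) * v i - \<mu> * \<delta>))"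
proof -
  define T1 where "T1 = exp (be * (hi + \<delta>)) * (if Uev lo hi v N then 1 else 0)"
  define T2 where "T2 = exp (be * lo) * (if Uev lo hi v N then 0 else 1)"
  define T3 where "T3 = exp (be * hi) * exp (lam * (Sv v N - lo))"
  define T4 where "T4 = exp (be * hi) * (\<Sum>i<N. exp ((be + \<mu>) * v i - \<mu> * \<delta>))"
  have T1: "T1 \<ge> 0" and T2: "T2 \<ge> 0" and T3: "T3 \<ge> 0" and T4: "T4 \<ge> 0"
    unfolding T1_def T2_def T3_def T4_def by (auto intro!: sum_nonneg mult_nonneg_nonneg)
  have "Yv be lo hi v N \<le> T1 + T2 + T3 + T4"
  proof (cases "alive lo hi v N")
    case True
    then have Y: "Yv be lo hi v N = exp (be * Sv v N)" by (rule Yv_alive)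
    have "Sv v N < hi" "lo < Sv v N" using True unfolding alive_def by auto
    then have "exp (be * Sv v N) \<le> exp (be * hi)" using be by simp
    also have "\<dots> \<le> T3" unfolding T3_def using \<open>lo < Sv v N\<close> lam
      by (simp add: mult_nonneg_nonneg)
    finally show ?thesis using Y T1 T2 T4 by linarith
  next
    case False
    then have ex: "\<exists>j. j \<le> N \<and> \<not> (lo < Sv v j \<and> Sv v j < hi)" unfolding alive_def by auto
    define k where "k = (LEAST j. j \<le> N \<and> \<not> (lo < Sv v j \<and> Sv v j < hi))"
    have k: "k \<le> N" "\<not> (lo < Sv v k \<and> Sv v k < hi)"
      using LeastI_ex[OF ex] unfolding k_def by auto
    have before: "lo < Sv v j \<and> Sv v j < hi" if "j < k" for j
      using not_less_Least[of j "\<lambda>j. j \<le> N \<and> \<not> (lo < Sv v j \<and> Sv v j < hi)"] that k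
      unfolding k_def[symmetric] by auto
    have dead: "\<not> alive lo hi v k" using k unfolding alive_def by auto
    have YN: "Yv be lo hi v N = Yv be lo hi v k" by (rule Yv_dead[OF dead k(1)])
    have Yk: "Yv be lo hi v k = exp (be * Sv v k)"
    proof (cases k)
      case 0 then show ?thesis by simp
    next
      case (Suc k')
      have "alive lo hi v k'" unfolding alive_def using before Suc by auto
      then show ?thesis using Suc by simp
    qed
    show ?thesis
    proof (cases "Sv v k \<le> lo")
      case True
      have "\<not> Uev lo hi v N"
      proof
        assume "Uev lo hi v N"
        then obtain k2 where k2: "k2 \<le> N" "Sv v k2 \<ge> hi" "\<forall>j<k2. lo < Sv v j" unfolding Uev_def by auto
        show False
        proof (cases "k2 < k")
          case True then show False using before[of k2] k2 by auto
        next
          case False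
          then show False
          proof (cases "k = k2")
            case True then show False using \<open>Sv v k \<le> lo\<close> k2(2) lo hi by auto
          next
            case False
            then have "k < k2" using \<open>\<not> k2 < k\<close> by auto
            then show False using k2(3) \<open>Sv v k \<le> lo\<close> by force
          qed
        qed
      qed
      then have "T2 = exp (be * lo)" unfolding T2_def by simp
      moreover have "exp (be * Sv v k) \<le> exp (be * lo)" using True be by simp
      ultimately show ?thesis using YN Yk T1 T3 T4 by linarith
    next
      case False
      then have up: "Sv v k \<ge> hi" using k by auto
      have U: "Uev lo hi v N" unfolding Uev_def using k(1) up before by auto
      then have T1e: "T1 = exp (be * (hi + \<delta>))" unfolding T1_def by simp
      show ?thesis
      proof (cases k)
        case 0
        then have "Sv v k = 0" by simp
        then have "exp (be * Sv v k) \<le> exp (be * (hi + \<delta>))" using be hi de by simp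
        then show ?thesis using YN Yk T1e T2 T3 T4 by linarith
      next
        case (Suc k')
        have "Sv v k' < hi" using before[of k'] Suc by auto
        have Sk: "Sv v k = Sv v k' + v k'" using Suc by (simp add: Sv_Suc)
        show ?thesis
        proof (cases "v k' \<le> \<delta>")
          case True
          then have "Sv v k \<le> hi + \<delta>" using Sk \<open>Sv v k' < hi\<close> by simp
          then have "exp (be * Sv v k) \<le> exp (be * (hi + \<delta>))" using be by simp
          then show ?thesis using YN Yk T1e T2 T3 T4 by linarith
        next
          case False
          have "Sv v k \<le> hi + v k'" using Sk \<open>Sv v k' < hi\<close> by simp
          then have "be * Sv v k \<le> be * (hi + v k')" using be by (intro mult_left_mono) auto
          then have "exp (be * Sv v k) \<le> exp (be * hi + be * v k')"
            by (simp add: distrib_left)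
          also have "\<dots> \<le> exp (be * hi + ((be + \<mu>) * v k' - \<mu> * \<delta>))"
          proof -
            have "\<mu> * \<delta> \<le> \<mu> * v k'" using False mu by (intro mult_left_mono) auto
            then show ?thesis by (simp add: algebra_simps)
          qed
          also have "\<dots> = exp (be * hi) * exp ((be + \<mu>) * v k' - \<mu> * \<delta>)" by (simp add: exp_add)
          also have "\<dots> \<le> T4" unfolding T4_def
            using Suc k(1)
            by (intro mult_left_mono member_le_sum) auto
          finally show ?thesis using YN Yk T1 T2 T3 by linarith
        qed
      qed
    qed
  qed
  then show ?thesis unfolding T1_def T2_def T3_def T4_def .
qed



definition vinc :: "(real \<Rightarrow> 'a \<Rightarrow> real) \<Rightarrow> real \<Rightarrow> real \<Rightarrow> nat \<Rightarrow> 'a \<Rightarrow> real" where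
  "vinc W be h i \<omega> = sqrt 2 * (W (real (Suc i) * h) \<omega> - W (real i * h) \<omega>) - be * h"

lemma bm_meas:
  assumes "std_brownian_motion M W" shows "W t \<in> borel_measurable M"
  using assms unfolding std_brownian_motion_def by blast

lemma bm_prob: "std_brownian_motion M W \<Longrightarrow> prob_space M"
  unfolding std_brownian_motion_def by blast

lemma vinc_meas[measurable]:
  assumes "std_brownian_motion M W" shows "vinc W be h i \<in> borel_measurable M"
  using bm_meas[OF assms] unfolding vinc_def by measurable

lemma vinc_tele:
  assumes "std_brownian_motion M W" "\<omega> \<in> space M"
  shows "Sv (\<lambda>i. vinc W be h i \<omega>) k = sqrt 2 * W (real k * h) \<omega> - be * (real k * h)"
proof (induction k)
  case 0
  have "W 0 \<omega> = 0" using assms unfolding std_brownian_motion_def by blast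
  then show ?case by simp
next
  case (Suc k)
  then show ?case by (simp add: Sv_Suc vinc_def algebra_simps)
qed

lemma vinc_indep:
  assumes "std_brownian_motion M W" "h > 0"
  shows "prob_space.indep_vars M (\<lambda>_. borel) (\<lambda>i \<omega>. vinc W be h i \<omega>) {..<n}"
proof -
  interpret prob_space M using bm_prob[OF assms(1)] .
  have all: "\<forall>(ts :: nat \<Rightarrow> real) n. 0 \<le> ts 0 \<longrightarrow> (\<forall>i<n. ts i < ts (Suc i)) \<longrightarrow>
        indep_vars (\<lambda>_. borel) (\<lambda>i \<omega>. W (ts (Suc i)) \<omega> - W (ts i) \<omega>) {..<n}"
    using assms(1) unfolding std_brownian_motion_def by blast
  have "indep_vars (\<lambda>_. borel) (\<lambda>i \<omega>. W (real (Suc i) * h) \<omega> - W (real i * h) \<omega>) {..<n}"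
    using all[rule_format, of "\<lambda>i. real i * h" n] assms(2) by auto
  then have "indep_vars (\<lambda>_. borel) (\<lambda>i \<omega>. (\<lambda>x. sqrt 2 * x - be * h) (W (real (Suc i) * h) \<omega> - W (real i * h) \<omega>)) {..<n}"
    by (rule indep_vars_compose2) auto
  then show ?thesis unfolding vinc_def .
qed

lemma vinc_mgf:
  assumes "std_brownian_motion M W" "h > 0"
  shows "integrable M (\<lambda>\<omega>. exp (c * vinc W be h i \<omega>))"
    and "(\<integral>\<omega>. exp (c * vinc W be h i \<omega>) \<partial>M) = exp (c\<^sup>2 * h - c * be * h)"
proof -
  have lt: "real i * h < real (Suc i) * h" "0 \<le> real i * h" using assms by auto
  have eq: "(\<lambda>\<omega>. exp (c * vinc W be h i \<omega>)) = (\<lambda>\<omega>. exp (- c * be * h) * exp ((c * sqrt 2) * (W (real (Suc i) * h) \<omega> - W (real i * h) \<omega>)))"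
    by (rule ext) (simp add: vinc_def exp_add[symmetric] algebra_simps)
  show "integrable M (\<lambda>\<omega>. exp (c * vinc W be h i \<omega>))"
    unfolding eq by (intro integrable_mult_right bm_mgf(1)[OF assms(1) lt(2) lt(1)])
  have "(\<integral>\<omega>. exp (c * vinc W be h i \<omega>) \<partial>M) = exp (- c * be * h) * exp ((c * sqrt 2)\<^sup>2 * (real (Suc i) * h - real i * h) / 2)"
    unfolding eq integral_mult_right_zero bm_mgf(2)[OF assms(1) lt(2) lt(1)] ..
  also have "\<dots> = exp (c\<^sup>2 * h - c * be * h)"
    by (simp add: exp_add[symmetric] power_mult_distrib algebra_simps)
  finally show "(\<integral>\<omega>. exp (c * vinc W be h i \<omega>) \<partial>M) = exp (c\<^sup>2 * h - c * be * h)" .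
qed

lemma Sv_PiM_meas:
  assumes "j \<le> k"
  shows "(\<lambda>r. Sv r j) \<in> borel_measurable (PiM {..<k} (\<lambda>_. borel))"
  unfolding Sv_def
proof (rule borel_measurable_sum)
  fix i assume "i \<in> {..<j}"
  then have "i \<in> {..<k}" using assms by auto
  then show "(\<lambda>r. r i) \<in> borel_measurable (PiM {..<k} (\<lambda>_. borel))"
    by (rule measurable_component_singleton)
qed

lemma alive_PiM_meas:
  "Measurable.pred (PiM {..<k} (\<lambda>_. borel)) (\<lambda>r. alive lo hi r k)"
  unfolding alive_def
proof -
  have "Measurable.pred (PiM {..<k} (\<lambda>_. borel)) (\<lambda>r. \<forall>j\<in>{..k}. lo < Sv r j \<and> Sv r j < hi)"
  proof (rule pred_intros_finite(3))
    fix j assume "j \<in> {..k}"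
    then have [measurable]: "(\<lambda>r. Sv r j) \<in> borel_measurable (PiM {..<k} (\<lambda>_. borel))"
      by (intro Sv_PiM_meas) auto
    show "Measurable.pred (PiM {..<k} (\<lambda>_. borel)) (\<lambda>r. lo < Sv r j \<and> Sv r j < hi)" by measurable
  qed auto
  then show "Measurable.pred (PiM {..<k} (\<lambda>_. borel)) (\<lambda>r. \<forall>j\<le>k. lo < Sv r j \<and> Sv r j < hi)"
  proof -
    have "(\<lambda>r. \<forall>j\<le>k. lo < Sv r j \<and> Sv r j < hi) = (\<lambda>r. \<forall>j\<in>{..k}. lo < Sv r j \<and> Sv r j < hi)"
      by auto
    then show ?thesis using \<open>Measurable.pred _ _\<close> by simp
  qed
qed

lemma Sv_restrict: "j \<le> k \<Longrightarrow> Sv (restrict r {..<k}) j = Sv r j"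
  unfolding Sv_def by (intro sum.cong) auto

lemma alive_restrict: "alive lo hi (restrict r {..<k}) k = alive lo hi r k"
  unfolding alive_def using Sv_restrict by auto

lemma opt_stop:
  assumes BM: "std_brownian_motion M W" and h: "h > 0" and hi: "hi \<ge> 0" and be: "be > 0"
  shows "integrable M (\<lambda>\<omega>. Yv be lo hi (\<lambda>i. vinc W be h i \<omega>) n)
     \<and> (\<integral>\<omega>. Yv be lo hi (\<lambda>i. vinc W be h i \<omega>) n \<partial>M) = 1"
proof (induction n)
  interpret prob_space M using bm_prob[OF BM] .
  case 0 then show ?case by (simp add: prob_space)
next
  interpret prob_space M using bm_prob[OF BM] .
  case (Suc k)
  define v where "v = (\<lambda>\<omega> i. vinc W be h i \<omega>)"
  define F' where "F' = (\<lambda>r::nat \<Rightarrow> real. if alive lo hi r k then exp (be * Sv r k) else 0)"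
  define G' where "G' = (\<lambda>r::nat \<Rightarrow> real. exp (be * r k) - 1)"
  have F'm: "F' \<in> borel_measurable (PiM {..<k} (\<lambda>_. borel))"
  proof -
    have [measurable]: "(\<lambda>r. Sv r k) \<in> borel_measurable (PiM {..<k} (\<lambda>_. borel))"
      by (rule Sv_PiM_meas) simp
    have [measurable]: "Measurable.pred (PiM {..<k} (\<lambda>_. borel)) (\<lambda>r. alive lo hi r k)"
      by (rule alive_PiM_meas)
    show ?thesis unfolding F'_def by measurable
  qed
  have G'm: "G' \<in> borel_measurable (PiM {k} (\<lambda>_. borel))"
  proof -
    have [measurable]: "(\<lambda>r. r k) \<in> borel_measurable (PiM {k} (\<lambda>_. borel))"
      by (rule measurable_component_singleton) simp
    show ?thesis unfolding G'_def by measurable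
  qed
  have ind0: "indep_vars (\<lambda>_. borel) (\<lambda>i \<omega>. vinc W be h i \<omega>) {..<Suc k}"
    by (rule vinc_indep[OF BM h])
  have ind1: "indep_var (PiM {..<k} (\<lambda>_. borel)) (\<lambda>\<omega>. restrict (\<lambda>i. vinc W be h i \<omega>) {..<k})
      (PiM {k} (\<lambda>_. borel)) (\<lambda>\<omega>. restrict (\<lambda>i. vinc W be h i \<omega>) {k})"
    by (rule indep_var_restrict[OF ind0]) auto
  have ind2: "indep_var borel (F' \<circ> (\<lambda>\<omega>. restrict (\<lambda>i. vinc W be h i \<omega>) {..<k}))
      borel (G' \<circ> (\<lambda>\<omega>. restrict (\<lambda>i. vinc W be h i \<omega>) {k}))"
    by (rule indep_var_compose[OF ind1 F'm G'm])
  define F where "F = (\<lambda>\<omega>. if alive lo hi (v \<omega>) k then exp (be * Sv (v \<omega>) k) else 0)"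
  define G where "G = (\<lambda>\<omega>. exp (be * vinc W be h k \<omega>) - 1)"
  have Feq: "F' \<circ> (\<lambda>\<omega>. restrict (\<lambda>i. vinc W be h i \<omega>) {..<k}) = F"
    unfolding F_def F'_def v_def comp_def
    by (rule ext) (simp add: alive_restrict Sv_restrict)
  have Geq: "G' \<circ> (\<lambda>\<omega>. restrict (\<lambda>i. vinc W be h i \<omega>) {k}) = G"
    unfolding G_def G'_def comp_def by simp
  have ind: "indep_var borel F borel G" using ind2 unfolding Feq Geq .
  have Fmeas: "F \<in> borel_measurable M"
    unfolding Feq[symmetric]
    by (intro measurable_comp[OF _ F'm] measurable_restrict) (auto intro: vinc_meas[OF BM])
  have Fbound: "norm (F \<omega>) \<le> exp (be * hi)" for \<omega>
  proof (cases "alive lo hi (v \<omega>) k")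
    case True
    then have "Sv (v \<omega>) k < hi" unfolding alive_def by auto
    then have "be * Sv (v \<omega>) k \<le> be * hi" using be by (auto intro: mult_left_mono)
    then show ?thesis using True unfolding F_def by simp
  next
    case False then show ?thesis unfolding F_def by simp
  qed
  have Fint: "integrable M F"
    by (rule integrable_const_bound[where B="exp (be * hi)"]) (use Fbound Fmeas in auto)
  have Gint: "integrable M G" unfolding G_def
    using vinc_mgf(1)[OF BM h, of be be k] by simp
  have EG: "(\<integral>\<omega>. G \<omega> \<partial>M) = 0"
    unfolding G_def using vinc_mgf[OF BM h, of be be k]
    by (simp add: prob_space power2_eq_square)
  have FGint: "integrable M (\<lambda>\<omega>. F \<omega> * G \<omega>)" by (rule indep_var_integrable[OF ind Fint Gint])
  have EFG: "(\<integral>\<omega>. F \<omega> * G \<omega> \<partial>M) = 0"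
    using indep_var_lebesgue_integral[OF ind Fint Gint] EG by simp
  have step: "(\<lambda>\<omega>. Yv be lo hi (\<lambda>i. vinc W be h i \<omega>) (Suc k)) =
      (\<lambda>\<omega>. Yv be lo hi (\<lambda>i. vinc W be h i \<omega>) k + F \<omega> * G \<omega>)"
    unfolding F_def G_def v_def by (rule ext, rule Yv_step)
  show ?case unfolding step using Suc FGint EFG by simp
qed



lemma Sv_vinc_meas[measurable]:
  assumes "std_brownian_motion M W"
  shows "(\<lambda>\<omega>. Sv (\<lambda>i. vinc W be h i \<omega>) k) \<in> borel_measurable M"
  unfolding Sv_def using vinc_meas[OF assms] by measurable

lemma discrete_bound:
  assumes BM: "std_brownian_motion M W" and h: "h > 0" and N: "N > 0" and be: "be > 0"
    and lo: "lo < 0" and hi: "0 \<le> hi" and de: "\<delta> > 0" and mu: "\<mu> \<ge> 0"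
  defines "U \<equiv> {\<omega> \<in> space M. Uev lo hi (\<lambda>i. vinc W be h i \<omega>) N}"
  shows "U \<in> sets M"
    and "1 \<le> exp (be * (hi + \<delta>)) * measure M U + exp (be * lo) * (1 - measure M U)
       + exp (be * hi) * exp (- be * lo / 2 - be\<^sup>2 * (real N * h) / 4)
       + exp (be * hi) * (real N * exp (\<mu> * (be + \<mu>) * h - \<mu> * \<delta>))"
proof -
  interpret prob_space M using bm_prob[OF BM] .
  note [measurable] = vinc_meas[OF BM] Sv_vinc_meas[OF BM] bm_meas[OF BM]
  show Um: "U \<in> sets M" unfolding U_def Uev_def by measurable
  define v where "v = (\<lambda>\<omega> i. vinc W be h i \<omega>)"
  define lam where "lam = be / 2"
  define H where "H = real N * h"
  have H: "H > 0" using h N unfolding H_def by simp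
  define f1 where "f1 = (\<lambda>\<omega>. exp (be * (hi + \<delta>)) * indicator U \<omega>)"
  define f2 where "f2 = (\<lambda>\<omega>. exp (be * lo) * (1 - indicator U \<omega>))"
  define f3 where "f3 = (\<lambda>\<omega>. exp (be * hi) * (exp (- lam * lo) * exp ((lam * sqrt 2) * (W H \<omega> - W 0 \<omega>)) * exp (- lam * be * H)))"
  define f4 where "f4 = (\<lambda>\<omega>. exp (be * hi) * (\<Sum>i<N. exp (- \<mu> * \<delta>) * exp ((be + \<mu>) * vinc W be h i \<omega>)))"
  have ptw: "Yv be lo hi (v \<omega>) N \<le> f1 \<omega> + f2 \<omega> + f3 \<omega> + f4 \<omega>" if w: "\<omega> \<in> space M" for \<omega>
  proof -
    have b: "Yv be lo hi (v \<omega>) N \<le> exp (be * (hi + \<delta>)) * (if Uev lo hi (v \<omega>) N then 1 else 0)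
     + exp (be * lo) * (if Uev lo hi (v \<omega>) N then 0 else 1)
     + exp (be * hi) * exp (lam * (Sv (v \<omega>) N - lo))
     + exp (be * hi) * (\<Sum>i<N. exp ((be + \<mu>) * v \<omega> i - \<mu> * \<delta>))"
      by (rule Yv_bound[OF lo hi be de mu]) (simp add: lam_def be less_imp_le)
    have W0: "W 0 \<omega> = 0" using BM w unfolding std_brownian_motion_def by blast
    have e1: "exp (be * (hi + \<delta>)) * (if Uev lo hi (v \<omega>) N then 1 else 0) = f1 \<omega>"
      unfolding f1_def U_def v_def using w by (simp add: indicator_def)
    have e2: "exp (be * lo) * (if Uev lo hi (v \<omega>) N then 0 else 1) = f2 \<omega>"
      unfolding f2_def U_def v_def using w by (simp add: indicator_def)
    have S: "Sv (v \<omega>) N = sqrt 2 * W H \<omega> - be * H"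
      unfolding v_def H_def by (rule vinc_tele[OF BM w])
    have "lam * (Sv (v \<omega>) N - lo) = - lam * lo + (lam * sqrt 2) * (W H \<omega> - W 0 \<omega>) + (- lam * be * H)"
      unfolding S W0 by (simp add: algebra_simps)
    then have e3: "exp (be * hi) * exp (lam * (Sv (v \<omega>) N - lo)) = f3 \<omega>"
      unfolding f3_def by (simp only: exp_add)
    have e4: "exp (be * hi) * (\<Sum>i<N. exp ((be + \<mu>) * v \<omega> i - \<mu> * \<delta>)) = f4 \<omega>"
      unfolding f4_def v_def by (simp add: exp_add[symmetric] exp_diff algebra_simps)
    show ?thesis using b e1 e2 e3 e4 by linarith
  qed
  have i1: "integrable M f1" unfolding f1_def using Um by (intro integrable_mult_right) (simp add: integrable_indicator_iff less_top[symmetric])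
  have i2: "integrable M f2" unfolding f2_def using Um
    by (intro integrable_mult_right integrable_diff) (simp_all add: integrable_indicator_iff less_top[symmetric])
  have i3: "integrable M f3" unfolding f3_def
    by (intro integrable_mult_right integrable_mult_left bm_mgf(1)[OF BM _ H]) simp
  have i4: "integrable M f4" unfolding f4_def
  proof (intro integrable_mult_right)
    show "integrable M (\<lambda>x. \<Sum>i<N. exp (- \<mu> * \<delta>) * exp ((be + \<mu>) * vinc W be h i x))"
      by (rule Bochner_Integration.integrable_sum, rule integrable_mult_right, rule vinc_mgf(1)[OF BM h])
  qed
  have I1: "integral\<^sup>L M f1 = exp (be * (hi + \<delta>)) * measure M U"
    unfolding f1_def using Um by simp
  have I2: "integral\<^sup>L M f2 = exp (be * lo) * (1 - measure M U)"
  proof -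
    have ii: "integrable M (indicator U :: 'a \<Rightarrow> real)"
      using Um by (simp add: integrable_indicator_iff less_top[symmetric])
    have "(\<integral>\<omega>. (1::real) - indicator U \<omega> \<partial>M) = (\<integral>\<omega>. (1::real) \<partial>M) - (\<integral>\<omega>. (indicator U \<omega> :: real) \<partial>M)"
      by (rule Bochner_Integration.integral_diff) (use ii in auto)
    then show ?thesis unfolding f2_def using Um by (simp add: prob_space)
  qed
  have I3: "integral\<^sup>L M f3 = exp (be * hi) * exp (- be * lo / 2 - be\<^sup>2 * (real N * h) / 4)"
  proof -
    have "integral\<^sup>L M f3 = exp (be * hi) * (exp (- lam * lo) * exp ((lam * sqrt 2)\<^sup>2 * (H - 0) / 2) * exp (- lam * be * H))"
      unfolding f3_def integral_mult_right_zero integral_mult_left_zero bm_mgf(2)[OF BM order.refl H] by simp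
    also have "\<dots> = exp (be * hi) * exp (- be * lo / 2 - be\<^sup>2 * (real N * h) / 4)"
      unfolding lam_def H_def by (simp add: exp_add[symmetric] power_mult_distrib power2_eq_square field_simps)
    finally show ?thesis .
  qed
  have I4: "integral\<^sup>L M f4 = exp (be * hi) * (real N * exp (\<mu> * (be + \<mu>) * h - \<mu> * \<delta>))"
  proof -
    have "integral\<^sup>L M f4 = exp (be * hi) * (\<Sum>i<N. exp (- \<mu> * \<delta>) * exp ((be + \<mu>)\<^sup>2 * h - (be + \<mu>) * be * h))"
      unfolding f4_def integral_mult_right_zero
      by (subst Bochner_Integration.integral_sum) (auto intro!: integrable_mult_right vinc_mgf(1)[OF BM h] simp: vinc_mgf(2)[OF BM h])
    also have "\<dots> = exp (be * hi) * (real N * exp (\<mu> * (be + \<mu>) * h - \<mu> * \<delta>))"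
      by (simp add: exp_add[symmetric] power2_eq_square algebra_simps)
    finally show ?thesis .
  qed
  have "1 = (\<integral>\<omega>. Yv be lo hi (v \<omega>) N \<partial>M)"
    using opt_stop[OF BM h hi be, of lo N] unfolding v_def by simp
  also have "\<dots> \<le> (\<integral>\<omega>. f1 \<omega> + f2 \<omega> + f3 \<omega> + f4 \<omega> \<partial>M)"
    using opt_stop[OF BM h hi be, of lo N] i1 i2 i3 i4 ptw unfolding v_def
    by (intro integral_mono) auto
  also have "\<dots> = integral\<^sup>L M f1 + integral\<^sup>L M f2 + integral\<^sup>L M f3 + integral\<^sup>L M f4"
    using i1 i2 i3 i4 by simp
  finally show "1 \<le> exp (be * (hi + \<delta>)) * measure M U + exp (be * lo) * (1 - measure M U)
       + exp (be * hi) * exp (- be * lo / 2 - be\<^sup>2 * (real N * h) / 4)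
       + exp (be * hi) * (real N * exp (\<mu> * (be + \<mu>) * h - \<mu> * \<delta>))"
    using I1 I2 I3 I4 by simp
qed



lemma cover_lemma:
  fixes h s :: real
  assumes "h > 0" "0 \<le> s" "s \<le> real k * h" "k \<ge> 1"
  shows "\<exists>j<k. real j * h \<le> s \<and> s \<le> real (Suc j) * h"
  using assms(3,4)
proof (induction k)
  case 0 then show ?case by simp
next
  case (Suc k)
  show ?case
  proof (cases "k \<ge> 1 \<and> s \<le> real k * h")
    case True
    then obtain j where "j < k" "real j * h \<le> s" "s \<le> real (Suc j) * h" using Suc.IH by blast
    then show ?thesis by (intro exI[of _ j]) auto
  next
    case False
    then have "real k * h \<le> s"
    proof (cases "k = 0")
      case True then show ?thesis using assms by simp
    next
      case False then show ?thesis using \<open>\<not> (k \<ge> 1 \<and> s \<le> real k * h)\<close> by auto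
    qed
    then show ?thesis using Suc.prems by (intro exI[of _ k]) auto
  qed
qed

lemma rat_near2:
  fixes lo up t d :: real
  assumes "lo < up" "lo \<le> t" "t \<le> up" "d > 0"
  shows "\<exists>r\<in>\<rat>. lo \<le> r \<and> r \<le> up \<and> \<bar>r - t\<bar> < d"
proof (cases "t < up")
  case True
  then have "t < min (t + d) up" using assms by auto
  then obtain r where "r \<in> \<rat>" "t < r" "r < min (t + d) up" using Rats_dense_in_real by blast
  then show ?thesis using assms by (intro bexI[of _ r]) auto
next
  case False
  then have "t = up" using assms by auto
  have "max (up - d) lo < up" using assms by auto
  then obtain r where "r \<in> \<rat>" "max (up - d) lo < r" "r < up" using Rats_dense_in_real by blast
  then show ?thesis using assms \<open>t = up\<close> by (intro bexI[of _ r]) auto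
qed

definition Gs :: "'a measure \<Rightarrow> (real \<Rightarrow> 'a \<Rightarrow> real) \<Rightarrow> real \<Rightarrow> real \<Rightarrow> real \<Rightarrow> nat \<Rightarrow> 'a set" where
  "Gs M W be H \<epsilon> n = {\<omega> \<in> space M. \<forall>k<(2::nat)^n. \<forall>r\<in>\<rat>. real k * (H / 2^n) \<le> r \<longrightarrow> r \<le> real (Suc k) * (H / 2^n) \<longrightarrow>
       sqrt 2 * W r \<omega> - be * r \<ge> sqrt 2 * W (real k * (H / 2^n)) \<omega> - be * (real k * (H / 2^n)) - \<epsilon>}"

lemma Gs_sets:
  assumes BM: "std_brownian_motion M W"
  shows "Gs M W be H \<epsilon> n \<in> sets M"
proof -
  note [measurable] = bm_meas[OF BM]
  show ?thesis unfolding Gs_def using countable_rat by measurable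
qed

lemma bm_cont:
  assumes BM: "std_brownian_motion M W" and w: "\<omega> \<in> space M"
  shows "continuous_on {0..} (\<lambda>t. W t \<omega>)" and "W 0 \<omega> = 0"
  using assms unfolding std_brownian_motion_def by blast+

lemma X_cont:
  assumes BM: "std_brownian_motion M W" and w: "\<omega> \<in> space M"
  shows "continuous_on {0..} (\<lambda>t. sqrt 2 * W t \<omega> - be * t)"
  using bm_cont(1)[OF BM w] by (intro continuous_intros)

lemma Gs_path:
  assumes BM: "std_brownian_motion M W" and H: "H > 0" and w: "\<omega> \<in> Gs M W be H \<epsilon> n"
    and k: "k < (2::nat)^n" and s: "real k * (H / 2^n) \<le> s" "s \<le> real (Suc k) * (H / 2^n)"
  shows "sqrt 2 * W s \<omega> - be * s \<ge> sqrt 2 * W (real k * (H / 2^n)) \<omega> - be * (real k * (H / 2^n)) - \<epsilon>"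
proof (rule ccontr)
  define h where "h = H / 2^n"
  have h: "h > 0" using H unfolding h_def by simp
  define f where "f = (\<lambda>t. sqrt 2 * W t \<omega> - be * t)"
  define c where "c = f (real k * h) - \<epsilon>"
  have ws: "\<omega> \<in> space M" using w unfolding Gs_def by auto
  have G: "\<forall>r\<in>\<rat>. real k * h \<le> r \<longrightarrow> r \<le> real (Suc k) * h \<longrightarrow> f r \<ge> c"
    using w k unfolding Gs_def h_def f_def c_def by auto
  assume "\<not> ?thesis"
  then have fs: "f s < c" unfolding f_def c_def h_def by simp
  have s0: "0 \<le> s" using s h unfolding h_def by (smt (verit) of_nat_0_le_iff zero_le_mult_iff)
  obtain d where d: "d > 0" "\<forall>x. 0 \<le> x \<longrightarrow> \<bar>x - s\<bar> < d \<longrightarrow> \<bar>f x - f s\<bar> < c - f s"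
    using cont_at_within[OF X_cont[OF BM ws, of be] s0, of "c - f s"] fs unfolding f_def by auto
  have lt: "real k * h < real (Suc k) * h" using h by simp
  obtain r where r: "r \<in> \<rat>" "real k * h \<le> r" "r \<le> real (Suc k) * h" "\<bar>r - s\<bar> < d"
    using rat_near2[OF lt _ _ d(1), of s] s unfolding h_def by auto
  have "0 \<le> r" using r(2) h by (smt (verit) of_nat_0_le_iff zero_le_mult_iff)
  then have "\<bar>f r - f s\<bar> < c - f s" using d r by auto
  moreover have "f r \<ge> c" using G r by auto
  ultimately show False by linarith
qed

lemma Gs_eventually:
  assumes BM: "std_brownian_motion M W" and H: "H > 0" and e: "\<epsilon> > 0" and w: "\<omega> \<in> space M"
  shows "\<exists>n0. \<forall>m\<ge>n0. \<omega> \<in> Gs M W be H \<epsilon> m"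
proof -
  define f where "f = (\<lambda>t. sqrt 2 * W t \<omega> - be * t)"
  have "continuous_on {0..H} f" unfolding f_def
    by (rule continuous_on_subset[OF X_cont[OF BM w]]) auto
  then have "uniformly_continuous_on {0..H} f" by (rule compact_uniformly_continuous) simp
  then obtain d where d: "d > 0" "\<forall>x\<in>{0..H}. \<forall>x'\<in>{0..H}. dist x' x < d \<longrightarrow> dist (f x') (f x) < \<epsilon>"
    using e unfolding uniformly_continuous_on_def by metis
  have "(\<lambda>n::nat. H / 2^n) \<longlonglongrightarrow> 0" using H by real_asymp
  from order_tendstoD(2)[OF this d(1)] obtain n0 where n0: "\<forall>m\<ge>n0. H / 2^m < d"
    unfolding eventually_sequentially by blast
  show ?thesis
  proof (intro exI allI impI)
    fix m assume "n0 \<le> m"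
    then have hm: "H / 2^m < d" using n0 by auto
    show "\<omega> \<in> Gs M W be H \<epsilon> m" unfolding Gs_def
    proof (intro CollectI conjI w allI impI ballI)
      fix k r assume k: "k < (2::nat)^m" and r: "r \<in> \<rat>" "real k * (H / 2^m) \<le> r" "r \<le> real (Suc k) * (H / 2^m)"
      have "real (Suc k) \<le> 2^m" using k by (metis Suc_leI of_nat_le_iff of_nat_numeral of_nat_power)
      then have "real (Suc k) * (H / 2^m) \<le> 2^m * (H / 2^m)" using H by (intro mult_right_mono) auto
      then have up: "real (Suc k) * (H / 2^m) \<le> H" by simp
      have k0: "0 \<le> real k * (H / 2^m)" using H by simp
      have kH: "real k * (H / 2^m) \<le> H" using up H by (smt (verit) k0 mult_right_mono of_nat_Suc distrib_right mult_1 divide_pos_pos zero_less_power)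
      have "real (Suc k) * (H / 2^m) = real k * (H / 2^m) + H / 2^m" by (simp add: algebra_simps add_divide_distrib)
      then have "dist r (real k * (H / 2^m)) < d" using r hm unfolding dist_real_def by linarith
      then have "dist (f r) (f (real k * (H / 2^m))) < \<epsilon>"
        using d(2) r up k0 kH by auto
      then show "sqrt 2 * W r \<omega> - be * r \<ge> sqrt 2 * W (real k * (H / 2^m)) \<omega> - be * (real k * (H / 2^m)) - \<epsilon>"
        unfolding f_def dist_real_def by linarith
    qed
  qed
qed



lemma alg_bound:
  fixes E1 E2 p R :: real
  assumes E1: "E1 \<ge> 1" and E2: "E2 > 0" and p: "0 \<le> p" and R: "R \<ge> 0"
    and h: "1 \<le> E1 * p + E2 * (1 - p) + R"
  shows "p \<ge> (1 - E2) / E1 - R"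
proof (rule ccontr)
  assume "\<not> ?thesis"
  then have "p < (1 - E2) / E1 - R" by simp
  then have "p * E1 < ((1 - E2) / E1 - R) * E1" using E1 by (intro mult_strict_right_mono) auto
  also have "\<dots> = 1 - E2 - R * E1" using E1 by (simp add: field_simps)
  finally have a: "p * E1 < 1 - E2 - R * E1" .
  have b: "R * E1 \<ge> R" using R E1 by (metis mult_left_mono mult.right_neutral)
  have c: "p * E2 \<ge> 0" using p E2 by simp
  show False using a b c h by (simp add: algebra_simps)
qed

lemma contain:
  assumes BM: "std_brownian_motion M W" and R: "reflected_solution M \<beta> 0 (2 * B) W Q1 Q2 L"
    and B: "B > 0" and y: "y \<ge> 2 * B" and H: "H > 0" and e: "\<epsilon> > 0"
    and wU: "\<omega> \<in> {\<omega> \<in> space M. Uev (- (B - \<epsilon>)) (y - 2 * B) (\<lambda>i. vinc W \<beta> (H / 2^n) i \<omega>) (2^n)}"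
    and wG: "\<omega> \<in> Gs M W \<beta> H \<epsilon> n"
  shows "\<omega> \<in> {\<omega> \<in> space M. hitting_time (\<lambda>t. Q2 t \<omega>) y < hitting_time (\<lambda>t. Q2 t \<omega>) B}"
proof -
  define h where "h = H / 2^n"
  have h: "h > 0" using H unfolding h_def by simp
  have w: "\<omega> \<in> space M" using wU by auto
  define X where "X = (\<lambda>t. sqrt 2 * W t \<omega> - \<beta> * t)"
  have Sv_eq: "Sv (\<lambda>i. vinc W \<beta> h i \<omega>) j = X (real j * h)" for j
    unfolding X_def by (rule vinc_tele[OF BM w])
  obtain k where k: "k \<le> 2^n" "Sv (\<lambda>i. vinc W \<beta> h i \<omega>) k \<ge> y - 2 * B"
    "\<forall>j<k. - (B - \<epsilon>) < Sv (\<lambda>i. vinc W \<beta> h i \<omega>) j"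
    using wU unfolding Uev_def h_def by auto
  define T where "T = real k * h"
  have T: "0 \<le> T" unfolding T_def using h by simp
  have XT: "X T \<ge> y - 2 * B" using k(2) Sv_eq unfolding T_def by simp
  have Xpos: "X s > - B" if s: "0 \<le> s" "s \<le> T" for s
  proof (cases "k = 0")
    case True
    then have "s = 0" using s unfolding T_def by simp
    then show ?thesis using bm_cont(2)[OF BM w] B unfolding X_def by simp
  next
    case False
    then obtain j where j: "j < k" "real j * h \<le> s" "s \<le> real (Suc j) * h"
      using cover_lemma[OF h s(1), of k] s(2) unfolding T_def by auto
    have "X s \<ge> X (real j * h) - \<epsilon>"
      using Gs_path[OF BM H wG, of j s] j k(1) unfolding X_def h_def by auto
    moreover have "X (real j * h) > - (B - \<epsilon>)" using k(3) j(1) Sv_eq by metis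
    ultimately show ?thesis by linarith
  qed
  have c: "continuous_on {0..} (\<lambda>t. Q2 t \<omega>)" by (rule refl_D(2)[OF R w])
  have pos: "\<forall>s\<in>{0..T}. Q2 s \<omega> > B"
  proof
    fix s assume "s \<in> {0..T}"
    then have "Q2 s \<omega> \<ge> 2 * B + X s" "X s > - B"
      using Q2_ge[OF R w, of s] Xpos[of s] unfolding X_def by auto
    then show "Q2 s \<omega> > B" by linarith
  qed
  have "Q2 T \<omega> \<ge> y" using Q2_ge[OF R w T] XT unfolding X_def by linarith
  then have "hitting_time (\<lambda>t. Q2 t \<omega>) y < hitting_time (\<lambda>t. Q2 t \<omega>) B"
    by (intro event_from_path[OF c Q2_0[OF R w] y T pos])
  then show ?thesis using w by simp
qed



lemma main_eta:
  fixes M :: "'a measure" and W Q1 Q2 L :: "real \<Rightarrow> 'a \<Rightarrow> real"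
    and \<beta> B y :: real
  assumes "\<beta> > 0" and B: "B > 0"
    and BM: "std_brownian_motion M W"
    and R: "reflected_solution M \<beta> 0 (2 * B) W Q1 Q2 L"
    and y: "y \<ge> 2 * B" and eta: "\<eta> > 0"
  shows "measure M {\<omega> \<in> space M. hitting_time (\<lambda>t. Q2 t \<omega>) y < hitting_time (\<lambda>t. Q2 t \<omega>) B}
           \<ge> exp (- \<beta> * (y - 2 * B)) * (1 - exp (- \<beta> * B)) - \<eta>"
proof -
  interpret prob_space M using bm_prob[OF BM] .
  note be = \<open>\<beta> > 0\<close>
  define a where "a = y - 2 * B"
  have a: "a \<ge> 0" using y unfolding a_def by simp
  define S where "S = {\<omega> \<in> space M. hitting_time (\<lambda>t. Q2 t \<omega>) y < hitting_time (\<lambda>t. Q2 t \<omega>) B}"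
  have Sm: "S \<in> sets M" unfolding S_def by (rule S_measurable[OF R B y])
  define c where "c = exp (- \<beta> * a) * (1 - exp (- \<beta> * B))"
  define \<phi> where "\<phi> = (\<lambda>e. exp (- \<beta> * (a + e)) * (1 - exp (- \<beta> * (B - e))))"
  have "(\<phi> \<longlongrightarrow> c) (at_right 0)" unfolding \<phi>_def c_def using be by real_asymp
  from order_tendstoD(1)[OF this, of "c - \<eta> / 4"] eta
  have ev: "eventually (\<lambda>e. \<phi> e > c - \<eta> / 4) (at_right 0)" by simp
  then obtain bnd where bnd: "bnd > 0" "\<forall>e>0. e < bnd \<longrightarrow> \<phi> e > c - \<eta> / 4"
    unfolding eventually_at_right_field by auto
  define \<epsilon> where "\<epsilon> = min bnd B / 2"
  have e: "\<epsilon> > 0" "\<epsilon> < B" using bnd B unfolding \<epsilon>_def by auto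
  have phie: "\<phi> \<epsilon> > c - \<eta> / 4" using bnd e unfolding \<epsilon>_def by auto
  define lo where "lo = - (B - \<epsilon>)"
  have lo: "lo < 0" using e unfolding lo_def by simp
  have "((\<lambda>H. exp (\<beta> * a) * exp (- \<beta> * lo / 2 - \<beta>\<^sup>2 * H / 4)) \<longlongrightarrow> 0) at_top"
    using be by real_asymp
  from order_tendstoD(2)[OF this, of "\<eta> / 4"] eta
  obtain H0 where H0: "\<forall>H\<ge>H0. exp (\<beta> * a) * exp (- \<beta> * lo / 2 - \<beta>\<^sup>2 * H / 4) < \<eta> / 4"
    unfolding eventually_at_top_linorder by auto
  define H where "H = max H0 1"
  have H: "H > 0" unfolding H_def by simp
  have R1: "exp (\<beta> * a) * exp (- \<beta> * lo / 2 - \<beta>\<^sup>2 * H / 4) < \<eta> / 4" using H0 unfolding H_def by simp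
  define Gp where "Gp = (\<lambda>n. {\<omega> \<in> space M. \<forall>m\<ge>n. \<omega> \<in> Gs M W \<beta> H \<epsilon> m})"
  have Gsm[measurable]: "Gs M W \<beta> H \<epsilon> m \<in> sets M" for m by (rule Gs_sets[OF BM])
  have Gpm: "Gp n \<in> sets M" for n
  proof -
    have Gsub: "Gs M W \<beta> H \<epsilon> n \<subseteq> space M" unfolding Gs_def by auto
    have "Gp n = space M \<inter> (\<Inter>m\<in>{n..}. Gs M W \<beta> H \<epsilon> m)" unfolding Gp_def using Gsub by auto
    also have "\<dots> \<in> sets M" by (intro sets.Int sets.top countable_Un_Int(2)) auto
    finally show ?thesis .
  qed
  have "incseq Gp" unfolding Gp_def incseq_def by auto
  moreover have "(\<Union>n. Gp n) = space M"
  proof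
    show "(\<Union>n. Gp n) \<subseteq> space M" unfolding Gp_def by auto
    show "space M \<subseteq> (\<Union>n. Gp n)"
    proof
      fix \<omega> assume w: "\<omega> \<in> space M"
      obtain n0 where "\<forall>m\<ge>n0. \<omega> \<in> Gs M W \<beta> H \<epsilon> m" using Gs_eventually[OF BM H e(1) w] by blast
      then show "\<omega> \<in> (\<Union>n. Gp n)" using w unfolding Gp_def by auto
    qed
  qed
  ultimately have "(\<lambda>n. measure M (Gp n)) \<longlonglongrightarrow> measure M (space M)"
    using finite_Lim_measure_incseq[of Gp] Gpm by auto
  then have GpLim: "(\<lambda>n. measure M (Gp n)) \<longlonglongrightarrow> 1" by (simp add: prob_space)
  define hn where "hn = (\<lambda>n::nat. H / 2^n)"
  define mun where "mun = (\<lambda>n::nat. 1 / sqrt (hn n))"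
  have "(\<lambda>n::nat. exp (\<beta> * a) * (real (2^n) * exp ((1 / sqrt (H / 2^n)) * (\<beta> + 1 / sqrt (H / 2^n)) * (H / 2^n) - (1 / sqrt (H / 2^n)) * \<epsilon>))) \<longlonglongrightarrow> 0"
    using H be e by real_asymp
  then have R2lim: "(\<lambda>n::nat. exp (\<beta> * a) * (real (2^n) * exp (mun n * (\<beta> + mun n) * hn n - mun n * \<epsilon>))) \<longlonglongrightarrow> 0"
    unfolding mun_def hn_def .
  have ev1: "eventually (\<lambda>n. exp (\<beta> * a) * (real (2^n) * exp (mun n * (\<beta> + mun n) * hn n - mun n * \<epsilon>)) < \<eta> / 4) sequentially"
    using order_tendstoD(2)[OF R2lim, of "\<eta> / 4"] eta by simp
  have ev2: "eventually (\<lambda>n. measure M (Gp n) > 1 - \<eta> / 4) sequentially"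
    using order_tendstoD(1)[OF GpLim, of "1 - \<eta> / 4"] eta by simp
  obtain n where n1: "exp (\<beta> * a) * (real (2^n) * exp (mun n * (\<beta> + mun n) * hn n - mun n * \<epsilon>)) < \<eta> / 4"
    and n2: "measure M (Gp n) > 1 - \<eta> / 4"
    using eventually_conj[OF ev1 ev2] eventually_sequentially by auto
  define U where "U = {\<omega> \<in> space M. Uev lo a (\<lambda>i. vinc W \<beta> (hn n) i \<omega>) (2^n)}"
  have hpos: "hn n > 0" unfolding hn_def using H by simp
  have mupos: "mun n \<ge> 0" unfolding mun_def using hpos by simp
  have NH: "real (2^n) * hn n = H" unfolding hn_def by simp
  note DB = discrete_bound[OF BM hpos _ be lo a e(1) mupos, of "2^n"]
  have Um: "U \<in> sets M" unfolding U_def using DB(1) by simp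
  have ineq: "1 \<le> exp (\<beta> * (a + \<epsilon>)) * measure M U + exp (\<beta> * lo) * (1 - measure M U)
       + exp (\<beta> * a) * exp (- \<beta> * lo / 2 - \<beta>\<^sup>2 * H / 4)
       + exp (\<beta> * a) * (real (2^n) * exp (mun n * (\<beta> + mun n) * hn n - mun n * \<epsilon>))"
    using DB(2) unfolding U_def NH by simp
  define R1v where "R1v = exp (\<beta> * a) * exp (- \<beta> * lo / 2 - \<beta>\<^sup>2 * H / 4)"
  define R2v where "R2v = exp (\<beta> * a) * (real (2^n) * exp (mun n * (\<beta> + mun n) * hn n - mun n * \<epsilon>))"
  have E1: "exp (\<beta> * (a + \<epsilon>)) \<ge> 1" using be a e by simp
  have pU: "measure M U \<ge> (1 - exp (\<beta> * lo)) / exp (\<beta> * (a + \<epsilon>)) - (R1v + R2v)"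
    by (rule alg_bound[OF E1 _ measure_nonneg]) (use ineq in \<open>auto simp: R1v_def R2v_def\<close>)
  have phieq: "(1 - exp (\<beta> * lo)) / exp (\<beta> * (a + \<epsilon>)) = \<phi> \<epsilon>"
  proof -
    have l: "exp (\<beta> * lo) = exp (- \<beta> * (B - \<epsilon>))" unfolding lo_def by (simp add: algebra_simps)
    have m: "exp (- \<beta> * (a + \<epsilon>)) = 1 / exp (\<beta> * (a + \<epsilon>))"
      by (simp add: exp_minus divide_inverse)
    show ?thesis unfolding \<phi>_def l m by simp
  qed
  have sub: "U \<inter> Gp n \<subseteq> S"
  proof
    fix \<omega> assume "\<omega> \<in> U \<inter> Gp n"
    then have wU: "\<omega> \<in> {\<omega> \<in> space M. Uev (- (B - \<epsilon>)) (y - 2 * B) (\<lambda>i. vinc W \<beta> (H / 2^n) i \<omega>) (2^n)}"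
      and wG: "\<omega> \<in> Gs M W \<beta> H \<epsilon> n"
      unfolding U_def Gp_def lo_def a_def hn_def by auto
    show "\<omega> \<in> S" unfolding S_def by (rule contain[OF BM R B y H e(1) wU wG])
  qed
  have "measure M U \<le> measure M ((U \<inter> Gp n) \<union> (space M - Gp n))"
    using Um Gpm sets.sets_into_space[OF Um] by (intro finite_measure_mono) auto
  also have "\<dots> \<le> measure M (U \<inter> Gp n) + measure M (space M - Gp n)"
    using Um Gpm by (intro measure_Un_le) auto
  also have "measure M (space M - Gp n) = 1 - measure M (Gp n)" using prob_compl[OF Gpm] .
  finally have "measure M (U \<inter> Gp n) \<ge> measure M U - (1 - measure M (Gp n))" by simp
  moreover have "measure M S \<ge> measure M (U \<inter> Gp n)" using sub Sm by (rule finite_measure_mono)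
  ultimately have "measure M S \<ge> \<phi> \<epsilon> - (R1v + R2v) - (1 - measure M (Gp n))"
    using pU phieq by linarith
  moreover have "R1v < \<eta> / 4" using R1 unfolding R1v_def .
  moreover have "R2v < \<eta> / 4" using n1 unfolding R2v_def .
  ultimately have "measure M S \<ge> c - \<eta>" using phie n2 by linarith
  then show ?thesis unfolding S_def c_def a_def .
qed


theorem lemma5p4:
  fixes M :: "'a measure" and W Q1 Q2 L :: "real \<Rightarrow> 'a \<Rightarrow> real"
    and \<beta> B y :: real
  assumes "prob_space M"
    and "\<beta> > 0" and "B > 0"
    and "std_brownian_motion M W"
    and "reflected_solution M \<beta> 0 (2 * B) W Q1 Q2 L"
    and "y \<ge> 2 * B"
  shows "measure M {\<omega> \<in> space M. hitting_time (\<lambda>t. Q2 t \<omega>) y < hitting_time (\<lambda>t. Q2 t \<omega>) B}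
           \<ge> (1 - exp (- \<beta> * B)) * exp (- \<beta> * (y - 2 * B))"
proof (rule field_le_epsilon)
  fix e :: real assume "e > 0"
  from main_eta[OF assms(2,3,4,5,6) this]
  show "(1 - exp (- \<beta> * B)) * exp (- \<beta> * (y - 2 * B))
    \<le> measure M {\<omega> \<in> space M. hitting_time (\<lambda>t. Q2 t \<omega>) y < hitting_time (\<lambda>t. Q2 t \<omega>) B} + e"
    by (simp add: mult.commute)
qed

end
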